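(* Let $m\ge1$, $y\in\mathbb{R}^{2m+1}_+$ and $\mathbf{Y}\in\boldsymbol{\mathcal{Y}}$. Then the problem of minimizing $\mathcal{I}(\mathbf{Y}\|\mathbf{W})$ over $\mathbf{W}\in\boldsymbol{\mathcal{W}}$ has the explicit minimizer $\mathbf{W}^\star=\mathbf{W}^\star(\mathbf{Y})$, namely the element of $\boldsymbol{\mathcal{W}}$ associated with the vector $x^\star\in\mathbb{R}^{m+1}_+$ given by $$x^\star_j=\frac{\widehat{\mathbf{Y}}_j}{2\sqrt{\sum_{i=0}^{2m}y_i}},\qquad \widehat{\mathbf{Y}}_j=\sum_{i=0}^m\mathbf{Y}_{i+j,i}+\sum_{i=j}^{j+m}\mathbf{Y}_{ij},\qquad j=0,\dots,m.$$ Moreover, for every $\mathbf{W}\in\boldsymbol{\mathcal{W}}$ the Pythagorean identity $$\mathcal{I}(\mathbf{Y}\|\mathbf{W})=\mathcal{I}(\mathbf{Y}\|\mathbf{W}^\star)+\mathcal{I}(\mathbf{W}^\star\|\mathbf{W})$$ holds.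
   Context: Matrices are indexed by rows $i=0,\dots,2m$ and columns $j=0,\dots,m$. $\boldsymbol{\mathcal{Y}}$ is the set of $\mathbf{Y}\in\mathbb{R}^{(2m+1)\times(m+1)}_+$ with $\mathbf{Y}_{ij}=0$ for $i<j$ and for $i>j+m$, and with row sums $\sum_j\mathbf{Y}_{ij}=y_i$ for all $i$. $\boldsymbol{\mathcal{W}}$ is the set of matrices $\mathbf{W}\in\mathbb{R}^{(2m+1)\times(m+1)}_+$ of the form $\mathbf{W}_{ij}=x_{i-j}x_j$ for $0\le j\le m$, $j\le i\le j+m$, and $\mathbf{W}_{ij}=0$ otherwise, for some $x\in\mathbb{R}^{m+1}_+$ (the element of $\boldsymbol{\mathcal{W}}$ "associated with" $x$). For nonnegative arrays $M,N$ of the same size, $\mathcal{I}(M\|N)=\sum_{i,j}\big(M_{ij}\log\frac{M_{ij}}{N_{ij}}-M_{ij}+N_{ij}\big)$ (convention $0\log0=0$; $+\infty$ if some $M_{ij}>0=N_{ij}$). *)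

theory Defs
  imports "HOL-Analysis.Analysis"
begin

text \<open>Matrices of size (2m+1) x (m+1) are represented as functions
  nat => nat => real; only the entries with i <= 2m, j <= m are relevant.\<close>

definition Ycal :: "nat \<Rightarrow> (nat \<Rightarrow> real) \<Rightarrow> (nat \<Rightarrow> nat \<Rightarrow> real) set" where
  "Ycal m y = {Y. (\<forall>i\<le>2*m. \<forall>j\<le>m. Y i j \<ge> 0)
              \<and> (\<forall>i\<le>2*m. \<forall>j\<le>m. (i < j \<or> i > j + m) \<longrightarrow> Y i j = 0)
              \<and> (\<forall>i\<le>2*m. (\<Sum>j\<le>m. Y i j) = y i)}"

definition assocW :: "nat \<Rightarrow> (nat \<Rightarrow> real) \<Rightarrow> nat \<Rightarrow> nat \<Rightarrow> real" where
  "assocW m x i j = (if j \<le> m \<and> j \<le> i \<and> i \<le> j + m then x (i - j) * x j else 0)"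

definition Wcal :: "nat \<Rightarrow> (nat \<Rightarrow> nat \<Rightarrow> real) set" where
  "Wcal m = {assocW m x | x. \<forall>j\<le>m. x j \<ge> 0}"

text \<open>One summand of the I-divergence, with 0 log 0 = 0 and value +infinity
  when a > 0 = b.\<close>
definition idiv_term :: "real \<Rightarrow> real \<Rightarrow> ereal" where
  "idiv_term a b = (if a = 0 then ereal b
                    else if b = 0 then \<infinity>
                    else ereal (a * ln (a / b) - a + b))"

definition idiv :: "nat \<Rightarrow> (nat \<Rightarrow> nat \<Rightarrow> real) \<Rightarrow> (nat \<Rightarrow> nat \<Rightarrow> real) \<Rightarrow> ereal" where
  "idiv m M N = (\<Sum>i\<le>2*m. \<Sum>j\<le>m. idiv_term (M i j) (N i j))"

definition Yhat :: "nat \<Rightarrow> (nat \<Rightarrow> nat \<Rightarrow> real) \<Rightarrow> nat \<Rightarrow> real" where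
  "Yhat m Y j = (\<Sum>i\<le>m. Y (i + j) i) + (\<Sum>i=j..j+m. Y i j)"

end

theory Submission
  imports Defs
begin

lemma col_sum:
  fixes Z :: "nat \<Rightarrow> nat \<Rightarrow> real"
  assumes band: "\<forall>i\<le>2*m. \<forall>j\<le>m. (i < j \<or> i > j + m) \<longrightarrow> Z i j = 0"
    and j: "j \<le> m"
  shows "(\<Sum>i\<le>2*m. Z i j * c) = (\<Sum>i=j..j+m. Z i j) * c"
proof -
  have "(\<Sum>i\<le>2*m. Z i j * c) = (\<Sum>i=j..j+m. Z i j * c)"
    by (rule sum.mono_neutral_right) (use band j in auto)
  thus ?thesis by (simp add: sum_distrib_right)
qed

lemma diag_sum:
  fixes Z :: "nat \<Rightarrow> nat \<Rightarrow> real"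
  assumes band: "\<forall>i\<le>2*m. \<forall>j\<le>m. (i < j \<or> i > j + m) \<longrightarrow> Z i j = 0"
    and j: "j \<le> m"
  shows "(\<Sum>i\<le>2*m. Z i j * a (i - j)) = (\<Sum>k\<le>m. Z (k + j) j * a k)"
proof -
  have "(\<Sum>i\<le>2*m. Z i j * a (i-j)) = (\<Sum>i=j..j+m. Z i j * a (i-j))"
    by (rule sum.mono_neutral_right) (use band j in auto)
  also have "\<dots> = (\<Sum>i=0+j..m+j. Z i j * a (i-j))" by (simp add: add.commute)
  also have "\<dots> = (\<Sum>k=0..m. Z (k+j) j * a k)" unfolding sum.shift_bounds_cl_nat_ivl by simp
  finally show ?thesis by (simp add: atLeast0AtMost)
qed

lemma band_sum:
  fixes Z :: "nat \<Rightarrow> nat \<Rightarrow> real"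
  assumes band: "\<forall>i\<le>2*m. \<forall>j\<le>m. (i < j \<or> i > j + m) \<longrightarrow> Z i j = 0"
  shows "(\<Sum>i\<le>2*m. \<Sum>j\<le>m. Z i j * (a (i-j) + a j)) = (\<Sum>k\<le>m. Yhat m Z k * a k)"
proof -
  have "(\<Sum>i\<le>2*m. \<Sum>j\<le>m. Z i j * (a (i-j) + a j))
      = (\<Sum>j\<le>m. \<Sum>i\<le>2*m. Z i j * a (i-j)) + (\<Sum>j\<le>m. \<Sum>i\<le>2*m. Z i j * a j)"
    by (subst sum.swap) (simp add: distrib_left sum.distrib)
  also have "(\<Sum>j\<le>m. \<Sum>i\<le>2*m. Z i j * a (i-j)) = (\<Sum>j\<le>m. \<Sum>k\<le>m. Z (k + j) j * a k)"
    using diag_sum[OF band] by simp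
  also have "\<dots> = (\<Sum>k\<le>m. (\<Sum>j\<le>m. Z (j + k) j) * a k)"
    by (subst sum.swap) (simp add: sum_distrib_right add.commute)
  also have "(\<Sum>j\<le>m. \<Sum>i\<le>2*m. Z i j * a j) = (\<Sum>j\<le>m. (\<Sum>i=j..j+m. Z i j) * a j)"
    using col_sum[OF band] by simp
  finally show ?thesis by (simp add: Yhat_def distrib_right sum.distrib)
qed

definition F :: "real \<Rightarrow> real \<Rightarrow> real" where
  "F a b = a * ln a - a * ln b - a + b"

lemma idiv_term_F: "a = 0 \<or> (a > 0 \<and> b > 0) \<Longrightarrow> idiv_term a b = ereal (F a b)"
  by (auto simp: idiv_term_def F_def ln_div algebra_simps)

lemma idiv_term_nonneg: "a \<ge> 0 \<Longrightarrow> b \<ge> 0 \<Longrightarrow> idiv_term a b \<ge> 0"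
proof -
  assume a: "a \<ge> 0" and b: "b \<ge> 0"
  show ?thesis
  proof (cases "a = 0 \<or> b = 0")
    case True thus ?thesis using a b by (auto simp: idiv_term_def)
  next
    case False
    hence ap: "a > 0" and bp: "b > 0" using a b by auto
    have "ln (b/a) \<le> b/a - 1" using ap bp by (intro ln_le_minus_one) simp
    hence "a * ln (b/a) \<le> a * (b/a - 1)" using ap by (intro mult_left_mono) auto
    also have "\<dots> = b - a" using ap by (simp add: field_simps)
    finally have "a * ln (a/b) \<ge> a - b" using ap bp by (simp add: ln_div algebra_simps)
    thus ?thesis using False by (simp add: idiv_term_def)
  qed
qed

lemma idiv_term_not_minf: "idiv_term a b \<noteq> -\<infinity>"
  by (simp add: idiv_term_def)

lemma sum_not_minf: "(\<And>x. x \<in> A \<Longrightarrow> f x \<noteq> (-\<infinity>::ereal)) \<Longrightarrow> sum f A \<noteq> -\<infinity>"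
  by (induction A rule: infinite_finite_induct) auto

lemma idiv_not_minf: "idiv m M N \<noteq> -\<infinity>"
  unfolding idiv_def by (intro sum_not_minf idiv_term_not_minf)

lemma idiv_inf:
  assumes "i \<le> 2*m" "j \<le> m" "M i j > 0" "N i j = 0"
  shows "idiv m M N = \<infinity>"
proof -
  have "(\<Sum>j\<le>m. idiv_term (M i j) (N i j)) = \<infinity>"
    using assms by (subst sum_Pinfty) (auto simp: idiv_term_def intro!: bexI[of _ j])
  thus ?thesis unfolding idiv_def using assms by (subst sum_Pinfty) (auto intro!: bexI[of _ i])
qed

lemma ln_band:
  fixes Z :: "nat \<Rightarrow> nat \<Rightarrow> real"
  assumes band: "\<forall>i\<le>2*m. \<forall>j\<le>m. (i < j \<or> i > j + m) \<longrightarrow> Z i j = 0"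
    and pos: "\<And>i j. i \<le> 2*m \<Longrightarrow> j \<le> m \<Longrightarrow> j \<le> i \<Longrightarrow> i \<le> j + m \<Longrightarrow> Z i j \<noteq> 0
                 \<Longrightarrow> x (i-j) > 0 \<and> x j > 0"
  shows "(\<Sum>i\<le>2*m. \<Sum>j\<le>m. Z i j * ln (assocW m x i j)) = (\<Sum>k\<le>m. Yhat m Z k * ln (x k))"
proof -
  have "(\<Sum>i\<le>2*m. \<Sum>j\<le>m. Z i j * ln (assocW m x i j))
      = (\<Sum>i\<le>2*m. \<Sum>j\<le>m. Z i j * (ln (x (i-j)) + ln (x j)))"
  proof (intro sum.cong refl)
    fix i j assume i: "i \<in> {..2*m}" and j: "j \<in> {..m}"
    show "Z i j * ln (assocW m x i j) = Z i j * (ln (x (i-j)) + ln (x j))"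
    proof (cases "Z i j = 0")
      case False
      hence b: "j \<le> i" "i \<le> j + m" using band i j by force+
      with pos[of i j] i j False have "x (i-j) > 0" "x j > 0" by auto
      thus ?thesis using b j by (simp add: assocW_def ln_mult)
    qed simp
  qed
  also have "\<dots> = (\<Sum>k\<le>m. Yhat m Z k * ln (x k))" by (rule band_sum[OF band])
  finally show ?thesis .
qed

lemma idiv_real:
  assumes "\<forall>i\<le>2*m. \<forall>j\<le>m. M i j = 0 \<or> (M i j > 0 \<and> N i j > 0)"
  shows "idiv m M N = ereal (\<Sum>i\<le>2*m. \<Sum>j\<le>m. F (M i j) (N i j))"
  unfolding idiv_def using assms by (simp add: idiv_term_F)

theorem lemma2:
  fixes m :: nat and y :: "nat \<Rightarrow> real" and Y :: "nat \<Rightarrow> nat \<Rightarrow> real"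
  assumes "m \<ge> 1"
    and "\<forall>i\<le>2*m. y i \<ge> 0"
    and "Y \<in> Ycal m y"
  shows "let xstar = (\<lambda>j. Yhat m Y j / (2 * sqrt (\<Sum>i\<le>2*m. y i)));
             Wstar = assocW m xstar
         in (\<forall>j\<le>m. xstar j \<ge> 0) \<and> Wstar \<in> Wcal m
            \<and> (\<forall>W\<in>Wcal m. idiv m Y Wstar \<le> idiv m Y W)
            \<and> (\<forall>W\<in>Wcal m. idiv m Y W = idiv m Y Wstar + idiv m Wstar W)"
proof -
  from assms(3) have Ynn: "\<forall>i\<le>2*m. \<forall>j\<le>m. Y i j \<ge> 0"
    and Yband: "\<forall>i\<le>2*m. \<forall>j\<le>m. (i < j \<or> i > j + m) \<longrightarrow> Y i j = 0"
    and Yrow: "\<forall>i\<le>2*m. (\<Sum>j\<le>m. Y i j) = y i" by (auto simp: Ycal_def)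
  define S where "S = (\<Sum>i\<le>2*m. y i)"
  define xs where "xs = (\<lambda>j. Yhat m Y j / (2 * sqrt S))"
  define Ws where "Ws = assocW m xs"
  have Yhat_nn: "Yhat m Y k \<ge> 0" if k: "k \<le> m" for k
    unfolding Yhat_def using Ynn k by (intro add_nonneg_nonneg sum_nonneg) auto
  have sumY: "(\<Sum>i\<le>2*m. \<Sum>j\<le>m. Y i j) = S" using Yrow by (simp add: S_def)
  have "(\<Sum>i\<le>2*m. \<Sum>j\<le>m. Y i j * (1 + 1)) = (\<Sum>k\<le>m. Yhat m Y k * 1)"
    using band_sum[OF Yband, of "\<lambda>_. 1"] by simp
  hence sumYhat: "(\<Sum>k\<le>m. Yhat m Y k) = 2 * S"
    using sumY by (simp add: sum_distrib_right[symmetric])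
  have S_nn: "S \<ge> 0" unfolding S_def using assms(2) by (intro sum_nonneg) auto
  have Yhat_le: "Yhat m Y k \<le> 2 * S" if k: "k \<le> m" for k
    unfolding sumYhat[symmetric] using k Yhat_nn by (intro member_le_sum) auto
  have Yle: "Y i j \<le> Yhat m Y (i-j) \<and> Y i j \<le> Yhat m Y j"
    if ij: "i \<le> 2*m" "j \<le> m" "j \<le> i" "i \<le> j + m" for i j
  proof
    have "Y (j + (i-j)) j \<le> (\<Sum>l\<le>m. Y (l + (i-j)) l)"
      by (rule member_le_sum) (use ij Ynn in auto)
    moreover have "0 \<le> (\<Sum>l=i-j..i-j+m. Y l (i-j))"
      using ij Ynn by (intro sum_nonneg) auto
    ultimately show "Y i j \<le> Yhat m Y (i-j)" using ij by (simp add: Yhat_def)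
  next
    have "Y i j \<le> (\<Sum>l=j..j+m. Y l j)"
      by (rule member_le_sum) (use ij Ynn in auto)
    moreover have "0 \<le> (\<Sum>l\<le>m. Y (l + j) l)"
      using ij Ynn by (intro sum_nonneg) auto
    ultimately show "Y i j \<le> Yhat m Y j" by (simp add: Yhat_def)
  qed
  have xs_nn: "\<forall>j\<le>m. xs j \<ge> 0" using Yhat_nn S_nn by (auto simp: xs_def)
  have xs_pos: "xs k > 0 \<longleftrightarrow> Yhat m Y k > 0" if k: "k \<le> m" for k
  proof
    assume "Yhat m Y k > 0"
    moreover hence "S > 0" using Yhat_le[OF k] by linarith
    ultimately show "xs k > 0" by (simp add: xs_def)
  next
    assume "xs k > 0"
    hence "Yhat m Y k \<noteq> 0" by (auto simp: xs_def)
    thus "Yhat m Y k > 0" using Yhat_nn[OF k] by linarith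
  qed
  have Ws_band: "\<forall>i\<le>2*m. \<forall>j\<le>m. (i < j \<or> i > j + m) \<longrightarrow> Ws i j = 0"
    by (auto simp: Ws_def assocW_def)
  have Ws_nn: "\<forall>i\<le>2*m. \<forall>j\<le>m. Ws i j \<ge> 0"
    using xs_nn by (auto simp: Ws_def assocW_def)
  have hatWs: "Yhat m Ws k = Yhat m Y k" if k: "k \<le> m" for k
  proof (cases "S = 0")
    case True
    hence "Yhat m Y k = 0" using Yhat_le[OF k] Yhat_nn[OF k] by linarith
    moreover have "Ws = (\<lambda>i j. 0)" using True by (auto simp: Ws_def assocW_def xs_def fun_eq_iff)
    ultimately show ?thesis by (simp add: Yhat_def)
  next
    case False
    hence Sp: "S > 0" using S_nn by linarith
    have "(\<Sum>l\<le>m. xs l) = (\<Sum>l\<le>m. Yhat m Y l) / (2 * sqrt S)"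
      by (simp add: xs_def sum_divide_distrib)
    also have "\<dots> = S / sqrt S" using sumYhat by simp
    also have "\<dots> = sqrt S" using Sp by (simp add: real_div_sqrt)
    finally have T: "(\<Sum>l\<le>m. xs l) = sqrt S" .
    have 1: "(\<Sum>i\<le>m. Ws (i + k) i) = (\<Sum>i\<le>m. xs i) * xs k"
      using k by (simp add: Ws_def assocW_def) (metis (no_types) mult.commute sum_distrib_left)
    have "(\<Sum>i=k..k+m. Ws i k) = (\<Sum>i=0+k..m+k. Ws i k)" by (simp add: add.commute)
    also have "\<dots> = (\<Sum>i=0..m. Ws (i+k) k)" unfolding sum.shift_bounds_cl_nat_ivl by simp
    also have "\<dots> = (\<Sum>i\<le>m. xs i) * xs k"
      using k by (simp add: Ws_def assocW_def sum_distrib_right atLeast0AtMost)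
    finally have 2: "(\<Sum>i=k..k+m. Ws i k) = (\<Sum>i\<le>m. xs i) * xs k" .
    have "Yhat m Ws k = 2 * sqrt S * xs k" unfolding Yhat_def 1 2 T by simp
    also have "\<dots> = Yhat m Y k" using Sp by (simp add: xs_def)
    finally show ?thesis .
  qed
  have main: "idiv m Y W = idiv m Y Ws + idiv m Ws W" if W: "W \<in> Wcal m" for W
  proof -
    from W obtain x where x: "\<forall>j\<le>m. x j \<ge> 0" and Wx: "W = assocW m x"
      by (auto simp: Wcal_def)
    show ?thesis
    proof (cases "\<exists>k\<le>m. Yhat m Y k > 0 \<and> x k = 0")
      case True
      then obtain k where k: "k \<le> m" "Yhat m Y k > 0" "x k = 0" by blast
      have inf1: "idiv m Y W = \<infinity>"
      proof (cases "\<exists>i\<le>m. Y (i + k) i > 0")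
        case True
        then obtain i where i: "i \<le> m" "Y (i + k) i > 0" by blast
        show ?thesis by (rule idiv_inf[of "i+k" m i]) (use i k in \<open>auto simp: Wx assocW_def\<close>)
      next
        case False
        hence "(\<Sum>i\<le>m. Y (i + k) i) \<le> 0" by (intro sum_nonpos) auto
        with k have "\<not> (\<forall>i\<in>{k..k+m}. Y i k \<le> 0)"
          using sum_nonpos[of "{k..k+m}" "\<lambda>i. Y i k"] unfolding Yhat_def by force
        then obtain i where i: "i \<in> {k..k+m}" "Y i k > 0" by force
        show ?thesis by (rule idiv_inf[of i m k]) (use i k in \<open>auto simp: Wx assocW_def\<close>)
      qed
      have "xs k > 0" using xs_pos k by blast
      hence inf2: "idiv m Ws W = \<infinity>"
        by (intro idiv_inf[of "2*k" m k]) (use k in \<open>auto simp: Wx Ws_def assocW_def mult_2\<close>)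
      show ?thesis using inf1 inf2 idiv_not_minf[of m Y Ws] by simp
    next
      case False
      hence xpos: "x k > 0" if "k \<le> m" "Yhat m Y k > 0" for k
        using that x by force
      have W_nn: "\<forall>i\<le>2*m. \<forall>j\<le>m. W i j \<ge> 0"
        using x by (auto simp: Wx assocW_def)
      have supp: "j \<le> i \<and> i \<le> j + m" if "i \<le> 2*m" "j \<le> m" "Y i j \<noteq> 0" for i j
        using Yband that by force
      have c1: "\<forall>i\<le>2*m. \<forall>j\<le>m. Y i j = 0 \<or> (Y i j > 0 \<and> W i j > 0)"
      proof (intro allI impI)
        fix i j assume ij: "i \<le> 2*m" "j \<le> m"
        show "Y i j = 0 \<or> (Y i j > 0 \<and> W i j > 0)"
        proof (cases "Y i j = 0")
          case False
          with supp ij have b: "j \<le> i" "i \<le> j + m" by auto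
          have Yp: "Y i j > 0" using Ynn ij False by force
          with Yle[OF ij b] have "Yhat m Y (i-j) > 0" "Yhat m Y j > 0" by linarith+
          with xpos ij b have "x (i-j) > 0" "x j > 0" by auto
          thus ?thesis using Yp ij b by (simp add: Wx assocW_def)
        qed simp
      qed
      have c2: "\<forall>i\<le>2*m. \<forall>j\<le>m. Y i j = 0 \<or> (Y i j > 0 \<and> Ws i j > 0)"
      proof (intro allI impI)
        fix i j assume ij: "i \<le> 2*m" "j \<le> m"
        show "Y i j = 0 \<or> (Y i j > 0 \<and> Ws i j > 0)"
        proof (cases "Y i j = 0")
          case False
          with supp ij have b: "j \<le> i" "i \<le> j + m" by auto
          have Yp: "Y i j > 0" using Ynn ij False by force
          with Yle[OF ij b] have "Yhat m Y (i-j) > 0" "Yhat m Y j > 0" by linarith+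
          with xs_pos ij b have "xs (i-j) > 0" "xs j > 0" by auto
          thus ?thesis using Yp ij b by (simp add: Ws_def assocW_def)
        qed simp
      qed
      have Ws_pos: "xs (i-j) > 0 \<and> xs j > 0"
        if ij: "i \<le> 2*m" "j \<le> m" "j \<le> i" "i \<le> j + m" "Ws i j \<noteq> 0" for i j
      proof -
        have "xs (i-j) \<noteq> 0" "xs j \<noteq> 0" using ij by (auto simp: Ws_def assocW_def)
        moreover have "xs (i-j) \<ge> 0" "xs j \<ge> 0" using xs_nn ij by auto
        ultimately show ?thesis by linarith
      qed
      have c3: "\<forall>i\<le>2*m. \<forall>j\<le>m. Ws i j = 0 \<or> (Ws i j > 0 \<and> W i j > 0)"
      proof (intro allI impI)
        fix i j assume ij: "i \<le> 2*m" "j \<le> m"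
        show "Ws i j = 0 \<or> (Ws i j > 0 \<and> W i j > 0)"
        proof (cases "Ws i j = 0")
          case False
          with Ws_band ij have b: "j \<le> i" "i \<le> j + m" by force+
          from Ws_pos[OF ij b False] have "xs (i-j) > 0" "xs j > 0" by auto
          with xs_pos ij b have "Yhat m Y (i-j) > 0" "Yhat m Y j > 0" by auto
          with xpos ij b have "x (i-j) > 0" "x j > 0" by auto
          moreover have "Ws i j > 0" using Ws_nn ij False by force
          ultimately show ?thesis using ij b by (simp add: Wx assocW_def)
        qed simp
      qed
      have L1: "(\<Sum>i\<le>2*m. \<Sum>j\<le>m. Y i j * ln (W i j)) = (\<Sum>k\<le>m. Yhat m Y k * ln (x k))"
        unfolding Wx
      proof (rule ln_band[OF Yband])
        fix i j assume ij: "i \<le> 2*m" "j \<le> m" "j \<le> i" "i \<le> j + m" "Y i j \<noteq> 0"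
        have "Y i j \<ge> 0" using Ynn ij by blast
        hence "Y i j > 0" using ij by linarith
        with Yle[of i j] ij have "Yhat m Y (i-j) > 0" "Yhat m Y j > 0" by auto
        with xpos ij show "x (i-j) > 0 \<and> x j > 0" by auto
      qed
      have L2: "(\<Sum>i\<le>2*m. \<Sum>j\<le>m. Y i j * ln (Ws i j)) = (\<Sum>k\<le>m. Yhat m Y k * ln (xs k))"
        unfolding Ws_def
      proof (rule ln_band[OF Yband])
        fix i j assume ij: "i \<le> 2*m" "j \<le> m" "j \<le> i" "i \<le> j + m" "Y i j \<noteq> 0"
        have "Y i j \<ge> 0" using Ynn ij by blast
        hence "Y i j > 0" using ij by linarith
        with Yle[of i j] ij have "Yhat m Y (i-j) > 0" "Yhat m Y j > 0" by auto
        with xs_pos ij show "xs (i-j) > 0 \<and> xs j > 0" by auto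
      qed
      have L3: "(\<Sum>i\<le>2*m. \<Sum>j\<le>m. Ws i j * ln (W i j)) = (\<Sum>k\<le>m. Yhat m Y k * ln (x k))"
      proof -
        have "(\<Sum>i\<le>2*m. \<Sum>j\<le>m. Ws i j * ln (W i j)) = (\<Sum>k\<le>m. Yhat m Ws k * ln (x k))"
          unfolding Wx
        proof (rule ln_band[OF Ws_band])
          fix i j assume ij: "i \<le> 2*m" "j \<le> m" "j \<le> i" "i \<le> j + m" "Ws i j \<noteq> 0"
          from Ws_pos[OF ij] have "xs (i-j) > 0" "xs j > 0" by auto
          with xs_pos ij have "Yhat m Y (i-j) > 0" "Yhat m Y j > 0" by auto
          with xpos ij show "x (i-j) > 0 \<and> x j > 0" by auto
        qed
        thus ?thesis using hatWs by simp
      qed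
      have L4: "(\<Sum>i\<le>2*m. \<Sum>j\<le>m. Ws i j * ln (Ws i j)) = (\<Sum>k\<le>m. Yhat m Y k * ln (xs k))"
      proof -
        have "(\<Sum>i\<le>2*m. \<Sum>j\<le>m. Ws i j * ln (Ws i j)) = (\<Sum>k\<le>m. Yhat m Ws k * ln (xs k))"
          by (subst (2) Ws_def, rule ln_band[OF Ws_band]) (use Ws_pos in auto)
        thus ?thesis using hatWs by simp
      qed
      show ?thesis
        unfolding idiv_real[OF c1] idiv_real[OF c2] idiv_real[OF c3]
        using L1 L2 L3 L4 by (simp add: F_def sum.distrib sum_subtractf)
    qed
  qed
  have nn: "idiv m Ws W \<ge> 0" if W: "W \<in> Wcal m" for W
  proof -
    from W obtain x where x: "\<forall>j\<le>m. x j \<ge> 0" and Wx: "W = assocW m x"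
      by (auto simp: Wcal_def)
    show ?thesis unfolding idiv_def
      using Ws_nn x by (intro sum_nonneg idiv_term_nonneg) (auto simp: Wx assocW_def)
  qed
  have "Ws \<in> Wcal m" using xs_nn by (auto simp: Wcal_def Ws_def)
  moreover have "\<forall>W\<in>Wcal m. idiv m Y Ws \<le> idiv m Y W"
    using main nn by (metis add_increasing2 order_refl)
  ultimately show ?thesis
    unfolding Let_def S_def[symmetric] xs_def[symmetric] Ws_def[symmetric]
    using xs_nn main by blast
qed

end
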